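(* Let $\gamma$ be a positive integer, $1\le n'\le n$, and $\lambda_1,\dots,\lambda_n\in\mathbb C$. Assume (Condition 1) there exist $0\le\theta_{\Lambda'}<2\pi$ and $0<\delta_{\Lambda'}<\pi/2$ with $\{\lambda_1,\dots,\lambda_{n'}\}\subset\{\eta\ne0:|\arg\eta-\theta_{\Lambda'}|<\delta_{\Lambda'}\}$, and (Condition 2) $\sum_{j=1}^{n'}\lambda_jm_j-\lambda_i\ne0$ for all $m\in\mathbb N^{n'}$ with $|m|\ge2$ and all $1\le i\le n$. Let $\mathfrak L=\bigcup_{i=1}^n\{\sum_{j=1}^{n'}\lambda_jm_j-\lambda_i: m\in\mathbb N^{n'},|m|\ge2\}$. Then there exist an interval $\widehat J=(\widehat\theta_0-\widehat\epsilon_0,\widehat\theta_0+\widehat\epsilon_0)$ with $\widehat\epsilon_0>0$ and a constant $C_{\widehat J}>0$ such that $S(\widehat J)\cap(-\overline{\mathfrak L})=\emptyset$ and $$\Big|\gamma\eta+\sum_{j=1}^{n'}\lambda_jm_j-\lambda_i\Big|\ge C_{\widehat J}(|\eta|+|m|)$$ for all $\eta\in S(\widehat J)$, all $1\le i\le n$ and all $m\in\mathbb N^{n'}$ with $|m|\ge2$.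
   Context: $\mathbb N$ is the set of nonnegative integers, $|m|=\sum_j m_j$. For an open interval $J$, $S(J)=\{x\in\mathbb C\setminus\{0\}:\arg x\in J\}$. $\overline{\mathfrak L}$ is the closure of $\mathfrak L$ in $\mathbb C$. *)

theory Defs
  imports "HOL-Analysis.Analysis"
begin

definition sector :: "real set \<Rightarrow> complex set" where
  "sector J = {x. x \<noteq> 0 \<and> (\<exists>t\<in>J. x = complex_of_real (norm x) * cis t)}"

text \<open>Multi-indices m in N^{n'}, represented as functions nat => nat supported in {1..n'}.\<close>
definition multi_idx :: "nat \<Rightarrow> (nat \<Rightarrow> nat) set" where
  "multi_idx n' = {m. \<forall>j. j \<notin> {1..n'} \<longrightarrow> m j = 0}"

definition mabs :: "nat \<Rightarrow> (nat \<Rightarrow> nat) \<Rightarrow> nat" where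
  "mabs n' m = (\<Sum>j=1..n'. m j)"

definition Lset :: "nat \<Rightarrow> nat \<Rightarrow> (nat \<Rightarrow> complex) \<Rightarrow> complex set" where
  "Lset n n' lam = (\<Union>i\<in>{1..n}. {(\<Sum>j=1..n'. lam j * of_nat (m j)) - lam i | m.
      m \<in> multi_idx n' \<and> mabs n' m \<ge> 2})"

end

theory Submission
  imports Defs
begin

lemma cos_half: fixes s :: real assumes "\<bar>s\<bar> \<le> pi/3" shows "cos s \<ge> 1/2"
proof -
  have "cos (pi/3) \<le> cos \<bar>s\<bar>" by (rule cos_monotone_0_pi_le) (use assms in auto)
  thus ?thesis by (simp add: cos_60)
qed

lemma lemA:
  fixes u L :: complex
  assumes u: "norm u = 1" and L: "L \<noteq> 0" and H: "Im (L * cnj u) = 0 \<longrightarrow> Re (L * cnj u) > 0"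
  shows "\<exists>\<epsilon>>0. \<exists>C>0. \<forall>s x. \<bar>s\<bar> < \<epsilon> \<longrightarrow> x \<ge> 0 \<longrightarrow>
           norm (complex_of_real x * u * cis s + L) \<ge> C * (x + 1)"
proof -
  define z where "z = L * cnj u"
  define k where "k = (if Im z = 0 then 0 else (Re z - 1) / Im z)"
  define p where "p = Complex 1 k"
  define b where "b = Re (p * z)"
  have b: "b > 0"
  proof (cases "Im z = 0")
    case True thus ?thesis using H unfolding b_def p_def k_def z_def[symmetric] by auto
  next
    case False
    have "b = Re z - k * Im z" unfolding b_def p_def by simp
    also have "\<dots> = 1" unfolding k_def using False by simp
    finally show ?thesis by simp
  qed
  have pn: "norm p > 0" unfolding p_def by (auto simp: complex_eq_iff)
  define \<epsilon> where "\<epsilon> = min (pi/3) (1 / (4 * (\<bar>k\<bar> + 1)))"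
  have eps: "\<epsilon> > 0" unfolding \<epsilon>_def by auto
  define C where "C = min (1/4) b / norm p"
  have C: "C > 0" unfolding C_def using b pn by auto
  have Lz: "L = u * z" unfolding z_def using u
    by (metis complex_norm_square mult.commute mult.left_commute mult_1 of_real_1 power_one)
  show ?thesis
  proof (rule exI[of _ \<epsilon>], rule conjI[OF eps], rule exI[of _ C], rule conjI[OF C], intro allI impI)
    fix s x :: real assume s: "\<bar>s\<bar> < \<epsilon>" and x: "x \<ge> 0"
    have c: "cos s \<ge> 1/2" using s cos_half[of s] unfolding \<epsilon>_def by auto
    have "\<bar>k * sin s\<bar> \<le> \<bar>k\<bar> * \<bar>s\<bar>"
      by (simp add: abs_mult abs_sin_x_le_abs_x mult_left_mono)
    also have "\<dots> \<le> (\<bar>k\<bar> + 1) * (1 / (4 * (\<bar>k\<bar> + 1)))"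
      using s unfolding \<epsilon>_def by (intro mult_mono) auto
    also have "\<dots> = 1/4" by simp
    finally have ks: "\<bar>k * sin s\<bar> \<le> 1/4" .
    have rp: "Re (p * cis s) \<ge> 1/4" using c ks unfolding p_def by (simp add: cis.sel)
    have "C * (x + 1) * norm p = min (1/4) b * (x + 1)" unfolding C_def using pn by simp
    also have "\<dots> \<le> x * Re (p * cis s) + b"
    proof -
      have "min (1/4) b * x \<le> x * Re (p * cis s)" using rp x
        by (metis min.cobounded1 mult.commute mult_right_mono order_trans)
      moreover have "min (1/4) b \<le> b" by simp
      ultimately show ?thesis by (simp add: algebra_simps)
    qed
    also have "\<dots> = Re (p * (complex_of_real x * cis s + z))"
      unfolding b_def by (simp add: algebra_simps)
    also have "\<dots> \<le> norm (p * (complex_of_real x * cis s + z))" by (rule complex_Re_le_cmod)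
    also have "\<dots> = norm p * norm (complex_of_real x * cis s + z)" by (simp add: norm_mult)
    also have "norm (complex_of_real x * cis s + z) = norm (complex_of_real x * u * cis s + L)"
    proof -
      have "complex_of_real x * u * cis s + L = u * (complex_of_real x * cis s + z)"
        using Lz by (simp add: algebra_simps)
      thus ?thesis using u by (simp add: norm_mult)
    qed
    finally show "norm (complex_of_real x * u * cis s + L) \<ge> C * (x + 1)"
      using pn by (simp add: mult.commute)
  qed
qed

lemma lemB:
  fixes u :: complex
  assumes "finite F"
    and "\<forall>L\<in>F. \<exists>\<epsilon>>0. \<exists>C>0. \<forall>s x. \<bar>s\<bar> < \<epsilon> \<longrightarrow> x \<ge> 0 \<longrightarrow>
           norm (complex_of_real x * u * cis s + L) \<ge> C * ((x::real) + 1)"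
  shows "\<exists>\<epsilon>>0. \<exists>C>0. \<forall>L\<in>F. \<forall>s x. \<bar>s\<bar> < \<epsilon> \<longrightarrow> x \<ge> 0 \<longrightarrow>
           norm (complex_of_real x * u * cis s + L) \<ge> C * ((x::real) + 1)"
  using assms
proof (induction F rule: finite_induct)
  case empty
  then show ?case by (metis empty_iff zero_less_one)
next
  case (insert a F)
  then obtain e1 C1 where 1: "e1 > 0" "C1 > 0" "\<forall>L\<in>F. \<forall>s x. \<bar>s\<bar> < e1 \<longrightarrow> x \<ge> 0 \<longrightarrow>
           norm (complex_of_real x * u * cis s + L) \<ge> C1 * ((x::real) + 1)" by auto
  from insert obtain e2 C2 where 2: "e2 > 0" "C2 > 0" "\<forall>s x. \<bar>s\<bar> < e2 \<longrightarrow> x \<ge> 0 \<longrightarrow>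
           norm (complex_of_real x * u * cis s + a) \<ge> C2 * ((x::real) + 1)" by auto
  show ?case
  proof (rule exI[of _ "min e1 e2"], rule conjI, use 1 2 in simp, rule exI[of _ "min C1 C2"], rule conjI, use 1 2 in simp, intro ballI allI impI)
    fix L s x assume L: "L \<in> insert a F" and s: "\<bar>s\<bar> < min e1 e2" and x: "(x::real) \<ge> 0"
    have m: "min C1 C2 * (x + 1) \<le> C1 * (x + 1)" "min C1 C2 * (x + 1) \<le> C2 * (x + 1)"
      using x by (auto intro: mult_right_mono)
    show "norm (complex_of_real x * u * cis s + L) \<ge> min C1 C2 * (x + 1)"
      using L 1(3) 2(3) s x m by (metis dual_order.trans insertE min_less_iff_conj)
  qed 
qed

lemma sector_scale:
  assumes "\<eta> \<in> sector J" "r > 0"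
  shows "complex_of_real r * \<eta> \<in> sector J"
proof -
  obtain t where t: "t \<in> J" "\<eta> = complex_of_real (norm \<eta>) * cis t" "\<eta> \<noteq> 0"
    using assms(1) unfolding sector_def by auto
  have "complex_of_real r * \<eta> = complex_of_real (norm (complex_of_real r * \<eta>)) * cis t"
    using assms(2) by (subst t(2)) (simp add: norm_mult)
  thus ?thesis using t assms(2) unfolding sector_def by auto
qed

lemma bad_unique:
  fixes L :: complex and t1 t2 :: real
  assumes L: "L \<noteq> 0" and d: "\<bar>t1 - t2\<bar> < 2 * pi"
    and b1: "Im (L * cnj (cis t1)) = 0" "Re (L * cnj (cis t1)) \<le> 0"
    and b2: "Im (L * cnj (cis t2)) = 0" "Re (L * cnj (cis t2)) \<le> 0"
  shows "t1 = t2"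
proof -
  define a1 where "a1 = Re (L * cnj (cis t1))"
  define a2 where "a2 = Re (L * cnj (cis t2))"
  have z1: "L * cnj (cis t1) = complex_of_real a1" using b1 unfolding a1_def by (simp add: complex_eq_iff)
  have z2: "L * cnj (cis t2) = complex_of_real a2" using b2 unfolding a2_def by (simp add: complex_eq_iff)
  have a1: "a1 < 0" using b1 z1 L unfolding a1_def
    by (metis cis_neq_zero complex_cnj_zero_iff mult_eq_0_iff of_real_0 order_le_less)
  have a2: "a2 < 0" using b2 z2 L unfolding a2_def
    by (metis cis_neq_zero complex_cnj_zero_iff mult_eq_0_iff of_real_0 order_le_less)
  have "L * cnj (cis t1) = L * cnj (cis t2) * cis (t2 - t1)"
    by (simp add: cis_cnj cis_mult)
  hence e: "complex_of_real a1 = complex_of_real a2 * cis (t2 - t1)" using z1 z2 by simp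
  hence "norm (complex_of_real a1) = norm (complex_of_real a2)" by (simp add: norm_mult)
  hence "a1 = a2" using a1 a2 by simp
  hence "cis (t2 - t1) = 1" using e a2 by simp
  hence "cos (t2 - t1) = 1" by (metis cis.sel(1) one_complex.sel(1))
  then obtain k :: int where k: "t2 - t1 = k * 2 * pi" using cos_one_2pi_int by auto
  have "\<bar>t1 - t2\<bar> = \<bar>real_of_int k\<bar> * (2 * pi)" using k
  proof -
    have "\<bar>t1 - t2\<bar> = \<bar>t2 - t1\<bar>" by simp
    also have "\<dots> = \<bar>real_of_int k * (2 * pi)\<bar>" using k by (simp add: mult.assoc)
    also have "\<dots> = \<bar>real_of_int k\<bar> * (2 * pi)" by (simp add: abs_mult)
    finally show ?thesis .
  qed
  hence "\<bar>real_of_int k\<bar> * (2 * pi) < 1 * (2 * pi)" using d by simp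
  hence "\<bar>real_of_int k\<bar> < 1" using pi_gt_zero by (simp only: mult_less_cancel_right)
  hence "k = 0" by linarith
  thus ?thesis using k by simp
qed

lemma subsingleton_finite: "(\<And>x y. x \<in> A \<Longrightarrow> y \<in> A \<Longrightarrow> x = y) \<Longrightarrow> finite A"
  by (metis finite.simps is_singletonI' is_singleton_the_elem)

theorem lemma2p3:
  fixes \<gamma> n n' :: nat and lam :: "nat \<Rightarrow> complex"
  assumes "\<gamma> > 0" and "1 \<le> n'" and "n' \<le> n"
    and cond1: "\<exists>\<theta> \<delta>. 0 \<le> \<theta> \<and> \<theta> < 2 * pi \<and> 0 < \<delta> \<and> \<delta> < pi / 2 \<and>
                  (\<forall>j\<in>{1..n'}. lam j \<in> sector {\<theta> - \<delta><..<\<theta> + \<delta>})"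
    and cond2: "\<forall>m\<in>multi_idx n'. \<forall>i\<in>{1..n}. mabs n' m \<ge> 2 \<longrightarrow>
                  (\<Sum>j=1..n'. lam j * of_nat (m j)) - lam i \<noteq> 0"
  shows "\<exists>\<theta>0 \<epsilon>0 C. \<epsilon>0 > 0 \<and> C > 0 \<and>
           sector {\<theta>0 - \<epsilon>0<..<\<theta>0 + \<epsilon>0} \<inter> uminus ` closure (Lset n n' lam) = {} \<and>
           (\<forall>\<eta>\<in>sector {\<theta>0 - \<epsilon>0<..<\<theta>0 + \<epsilon>0}. \<forall>i\<in>{1..n}. \<forall>m\<in>multi_idx n'.
              mabs n' m \<ge> 2 \<longrightarrow>
              norm (of_nat \<gamma> * \<eta> + (\<Sum>j=1..n'. lam j * of_nat (m j)) - lam i)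
                \<ge> C * (norm \<eta> + real (mabs n' m)))"
proof -
  obtain \<theta> \<delta> where \<delta>: "0 < \<delta>" "\<delta> < pi / 2"
    and lsec: "\<forall>j\<in>{1..n'}. lam j \<in> sector {\<theta> - \<delta><..<\<theta> + \<delta>}"
    using cond1 by auto
  define u where "u = cis \<theta>"
  have nu: "norm u = 1" unfolding u_def by simp
  have lampos: "Re (cnj u * lam j) > 0" if j: "j \<in> {1..n'}" for j
  proof -
    obtain t where t: "t \<in> {\<theta> - \<delta><..<\<theta> + \<delta>}" "lam j = complex_of_real (norm (lam j)) * cis t" "lam j \<noteq> 0"
      using lsec j unfolding sector_def by blast
    have "cnj u * lam j = complex_of_real (norm (lam j)) * cis (t - \<theta>)"
      unfolding u_def by (subst t(2)) (simp add: cis_cnj cis_mult algebra_simps)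
    hence "Re (cnj u * lam j) = norm (lam j) * cos (t - \<theta>)" by simp
    moreover have "cos (t - \<theta>) > 0" using t(1) \<delta> by (intro cos_gt_zero_pi) auto
    ultimately show ?thesis using t(3) by simp
  qed
  define c where "c = Min ((\<lambda>j. Re (cnj u * lam j)) ` {1..n'})"
  have c: "c > 0" unfolding c_def using lampos assms(2) by (subst Min_gr_iff) auto
  have cle: "c \<le> Re (cnj u * lam j)" if "j \<in> {1..n'}" for j
    unfolding c_def using that by (intro Min_le) auto
  define \<Lambda> where "\<Lambda> = (\<Sum>i=1..n. norm (lam i))"
  have \<Lambda>: "norm (lam i) \<le> \<Lambda>" if "i \<in> {1..n}" for i
    unfolding \<Lambda>_def using that by (intro member_le_sum) auto
  have \<Lambda>0: "\<Lambda> \<ge> 0" unfolding \<Lambda>_def by (intro sum_nonneg) auto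
  define M :: nat where "M = nat \<lceil>2 * \<Lambda> / c\<rceil> + 1"
  have M1: "M \<ge> 1" unfolding M_def by simp
  have Mc: "real M * c \<ge> 2 * \<Lambda>"
  proof -
    have "2 * \<Lambda> / c \<le> real M" unfolding M_def by linarith
    thus ?thesis using c by (simp add: field_simps)
  qed
  define Ms where "Ms = {m \<in> multi_idx n'. 2 \<le> mabs n' m \<and> mabs n' m < M}"
  have finMs: "finite Ms"
  proof (rule finite_subset)
    show "Ms \<subseteq> {f. \<forall>x. (x \<in> {1..n'} \<longrightarrow> f x \<in> {..<M}) \<and> (x \<notin> {1..n'} \<longrightarrow> f x = 0)}"
    proof (intro subsetI CollectI allI conjI impI)
      fix m x assume m: "m \<in> Ms" and x: "x \<in> {1..n'}"
      have "m x \<le> mabs n' m" unfolding mabs_def using x by (intro member_le_sum) auto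
      thus "m x \<in> {..<M}" using m unfolding Ms_def by auto
    next
      fix m x assume m: "m \<in> Ms" and x: "x \<notin> {1..n'}"
      thus "m x = 0" unfolding Ms_def multi_idx_def by auto
    qed
  qed (rule finite_set_of_finite_funs, auto)
  define Sm where "Sm m = (\<Sum>j=1..n'. lam j * of_nat (m j))" for m :: "nat \<Rightarrow> nat"
  define F where "F = (\<lambda>(i,m). Sm m - lam i) ` ({1..n} \<times> Ms)"
  have finF: "finite F" unfolding F_def using finMs by auto
  have F0: "L \<noteq> 0" if "L \<in> F" for L
    using that cond2 unfolding F_def Ms_def Sm_def by auto
  define I where "I = {\<theta> - pi/6<..<\<theta> + pi/6}"
  define bad where "bad L t \<longleftrightarrow> Im (L * cnj (cis t)) = 0 \<and> Re (L * cnj (cis t)) \<le> 0" for L t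
  define B where "B = (\<Union>L\<in>F. {t\<in>I. bad L t})"
  have finB: "finite B" unfolding B_def
  proof (intro finite_UN_I finF subsingleton_finite)
    fix L x y assume L: "L \<in> F" and x: "x \<in> {t\<in>I. bad L t}" and y: "y \<in> {t\<in>I. bad L t}"
    have "\<bar>x - y\<bar> < 2 * pi" using x y pi_gt_zero unfolding I_def by auto
    thus "x = y" using x y F0[OF L] bad_unique[of L x y] unfolding bad_def by auto
  qed
  have "infinite I" unfolding I_def by simp
  then obtain \<theta>0 where \<theta>0: "\<theta>0 \<in> I" "\<theta>0 \<notin> B" using finB
    by (metis Diff_iff finite_Diff2 finite_subset subsetI)
  have "\<forall>L\<in>F. \<exists>\<epsilon>>0. \<exists>C>0. \<forall>s x. \<bar>s\<bar> < \<epsilon> \<longrightarrow> x \<ge> 0 \<longrightarrow>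
           norm (complex_of_real x * cis \<theta>0 * cis s + L) \<ge> C * ((x::real) + 1)"
  proof
    fix L assume L: "L \<in> F"
    have "\<not> bad L \<theta>0" using \<theta>0 L unfolding B_def by auto
    thus "\<exists>\<epsilon>>0. \<exists>C>0. \<forall>s x. \<bar>s\<bar> < \<epsilon> \<longrightarrow> x \<ge> 0 \<longrightarrow>
           norm (complex_of_real x * cis \<theta>0 * cis s + L) \<ge> C * ((x::real) + 1)"
      using F0[OF L] unfolding bad_def by (intro lemA) auto
  qed
  from lemB[OF finF this] obtain \<epsilon>1 C2 where e1: "\<epsilon>1 > 0" "C2 > 0"
    and small: "\<forall>L\<in>F. \<forall>s x. \<bar>s\<bar> < \<epsilon>1 \<longrightarrow> x \<ge> 0 \<longrightarrow>
           norm (complex_of_real x * cis \<theta>0 * cis s + L) \<ge> C2 * ((x::real) + 1)" by blast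
  define \<epsilon>0 where "\<epsilon>0 = min \<epsilon>1 (pi/6)"
  define C1 where "C1 = min (1/2) (c/2)"
  define C where "C = min C1 (C2 / M)"
  have e0: "\<epsilon>0 > 0" unfolding \<epsilon>0_def using e1 by simp
  have C1: "C1 > 0" unfolding C1_def using c by simp
  have C: "C > 0" unfolding C_def using C1 e1 M1 by simp
  have main: "norm (of_nat \<gamma> * \<eta> + Sm m - lam i) \<ge> C * (norm \<eta> + real (mabs n' m))"
    if \<eta>: "\<eta> \<in> sector {\<theta>0 - \<epsilon>0<..<\<theta>0 + \<epsilon>0}" and i: "i \<in> {1..n}" and m: "m \<in> multi_idx n'"
      and m2: "mabs n' m \<ge> 2" for \<eta> i m
  proof -
    obtain t where t: "t \<in> {\<theta>0 - \<epsilon>0<..<\<theta>0 + \<epsilon>0}" "\<eta> = complex_of_real (norm \<eta>) * cis t"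
      using \<eta> unfolding sector_def by blast
    show ?thesis
    proof (cases "mabs n' m < M")
      case True
      have LF: "Sm m - lam i \<in> F" unfolding F_def Ms_def using True i m m2 by force
      have st: "\<bar>t - \<theta>0\<bar> < \<epsilon>1" using t(1) unfolding \<epsilon>0_def by auto
      have x0: "real \<gamma> * norm \<eta> \<ge> 0" by simp
      have eq: "of_nat \<gamma> * \<eta> + Sm m - lam i
          = complex_of_real (real \<gamma> * norm \<eta>) * cis \<theta>0 * cis (t - \<theta>0) + (Sm m - lam i)"
        by (subst t(2)) (simp add: cis_mult)
      have "C * (norm \<eta> + real (mabs n' m)) \<le> (C2 / M) * (norm \<eta> + real (mabs n' m))"
        unfolding C_def by (intro mult_right_mono) auto
      also have "\<dots> \<le> (C2 / M) * (real M * (norm \<eta> + 1))"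
      proof (intro mult_left_mono)
        have "norm \<eta> \<le> real M * norm \<eta>" using M1 by (simp add: mult_le_cancel_right1)
        thus "norm \<eta> + real (mabs n' m) \<le> real M * (norm \<eta> + 1)" using True
          by (simp add: algebra_simps)
      qed (use e1 in auto)
      also have "\<dots> = C2 * (norm \<eta> + 1)" using M1 by simp
      also have "\<dots> \<le> C2 * (real \<gamma> * norm \<eta> + 1)"
        using assms(1) e1 by (intro mult_left_mono) (auto simp: mult_le_cancel_right1)
      also have "\<dots> \<le> norm (of_nat \<gamma> * \<eta> + Sm m - lam i)"
        unfolding eq using small LF st x0 by blast
      finally show ?thesis .
    next
      case False
      have tth: "\<bar>t - \<theta>\<bar> \<le> pi/3" using t(1) \<theta>0(1) unfolding I_def \<epsilon>0_def by (auto simp: abs_if min_def split: if_splits)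
      have r1: "Re (cnj u * \<eta>) \<ge> norm \<eta> / 2"
      proof -
        have "cnj u * \<eta> = complex_of_real (norm \<eta>) * cis (t - \<theta>)"
          unfolding u_def by (subst t(2)) (simp add: cis_cnj cis_mult algebra_simps)
        hence "Re (cnj u * \<eta>) = norm \<eta> * cos (t - \<theta>)" by simp
        moreover have "cos (t - \<theta>) \<ge> 1/2" using cos_half[OF tth] .
        moreover have "norm \<eta> * (1/2) \<le> norm \<eta> * cos (t - \<theta>)"
          using cos_half[OF tth] by (intro mult_left_mono) auto
        ultimately show ?thesis by simp
      qed
      have r2: "Re (cnj u * Sm m) \<ge> c * real (mabs n' m)"
      proof -
        have "Re (cnj u * Sm m) = (\<Sum>j=1..n'. real (m j) * Re (cnj u * lam j))"
          unfolding Sm_def by (simp add: sum_distrib_left Re_sum algebra_simps)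
        also have "\<dots> \<ge> (\<Sum>j=1..n'. real (m j) * c)"
          using cle by (intro sum_mono mult_left_mono) auto
        finally show ?thesis unfolding mabs_def by (simp add: sum_distrib_left mult.commute)
      qed
      have r3: "Re (cnj u * lam i) \<le> \<Lambda>"
        using complex_Re_le_cmod[of "cnj u * lam i"] \<Lambda>[OF i] nu by (simp add: norm_mult)
      have mM: "c * real (mabs n' m) \<ge> 2 * \<Lambda>"
      proof -
        have "real M \<le> real (mabs n' m)" using False by simp
        hence "c * real M \<le> c * real (mabs n' m)" using c by (intro mult_left_mono) auto
        thus ?thesis using Mc by (simp add: mult.commute)
      qed
      have "C * (norm \<eta> + real (mabs n' m)) \<le> C1 * (norm \<eta> + real (mabs n' m))"
        unfolding C_def by (intro mult_right_mono) auto
      also have "\<dots> \<le> norm \<eta> / 2 + c * real (mabs n' m) / 2"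
      proof -
        have "C1 * norm \<eta> \<le> (1/2) * norm \<eta>" unfolding C1_def
          by (intro mult_right_mono) auto
        moreover have "C1 * real (mabs n' m) \<le> (c/2) * real (mabs n' m)" unfolding C1_def
          by (intro mult_right_mono) auto
        ultimately show ?thesis by (simp add: algebra_simps)
      qed
      also have "\<dots> \<le> real \<gamma> * Re (cnj u * \<eta>) + Re (cnj u * Sm m) - Re (cnj u * lam i)"
      proof -
        have "norm \<eta> / 2 \<le> real \<gamma> * Re (cnj u * \<eta>)"
        proof -
          have g: "1 \<le> real \<gamma>" using assms(1) by simp
          have "0 \<le> Re (cnj u * \<eta>)" using r1 norm_ge_zero[of \<eta>] by linarith
          hence "1 * Re (cnj u * \<eta>) \<le> real \<gamma> * Re (cnj u * \<eta>)" using g by (intro mult_right_mono) auto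
          thus ?thesis using r1 by simp
        qed
        thus ?thesis using r2 r3 mM by linarith
      qed
      also have "\<dots> = Re (cnj u * (of_nat \<gamma> * \<eta> + Sm m - lam i))" by (simp add: algebra_simps)
      also have "\<dots> \<le> norm (cnj u * (of_nat \<gamma> * \<eta> + Sm m - lam i))" by (rule complex_Re_le_cmod)
      also have "\<dots> = norm (of_nat \<gamma> * \<eta> + Sm m - lam i)" using nu by (simp add: norm_mult)
      finally show ?thesis .
    qed
  qed
  have clos: "sector {\<theta>0 - \<epsilon>0<..<\<theta>0 + \<epsilon>0} \<inter> uminus ` closure (Lset n n' lam) = {}"
  proof (rule ccontr)
    assume "\<not> ?thesis"
    then obtain \<eta> l where \<eta>: "\<eta> \<in> sector {\<theta>0 - \<epsilon>0<..<\<theta>0 + \<epsilon>0}" and l: "l \<in> closure (Lset n n' lam)"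
      and el: "\<eta> = - l" by auto
    have \<eta>0: "\<eta> \<noteq> 0" using \<eta> unfolding sector_def by auto
    define \<eta>' where "\<eta>' = complex_of_real (1 / real \<gamma>) * \<eta>"
    have \<eta>'s: "\<eta>' \<in> sector {\<theta>0 - \<epsilon>0<..<\<theta>0 + \<epsilon>0}" unfolding \<eta>'_def
      by (rule sector_scale[OF \<eta>]) (use assms(1) in simp)
    have g\<eta>: "of_nat \<gamma> * \<eta>' = \<eta>" unfolding \<eta>'_def using assms(1) by simp
    define d where "d = C * norm \<eta>'"
    have d: "d > 0" unfolding d_def \<eta>'_def using C \<eta>0 assms(1) by (simp add: norm_mult)
    have "Lset n n' lam \<subseteq> {z. d \<le> norm (\<eta> + z)}"
    proof
      fix z assume "z \<in> Lset n n' lam"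
      then obtain i m where i: "i \<in> {1..n}" and m: "m \<in> multi_idx n'" and m2: "mabs n' m \<ge> 2"
        and z: "z = Sm m - lam i" unfolding Lset_def Sm_def by auto
      have "d \<le> C * (norm \<eta>' + real (mabs n' m))" unfolding d_def using C by simp
      also have "\<dots> \<le> norm (of_nat \<gamma> * \<eta>' + Sm m - lam i)" by (rule main[OF \<eta>'s i m m2])
      also have "\<dots> = norm (\<eta> + z)" unfolding z g\<eta> by (simp add: algebra_simps)
      finally show "z \<in> {z. d \<le> norm (\<eta> + z)}" by simp
    qed
    moreover have "closed {z. d \<le> norm (\<eta> + z)}"
      by (intro closed_Collect_le continuous_intros)
    ultimately have "closure (Lset n n' lam) \<subseteq> {z. d \<le> norm (\<eta> + z)}" by (rule closure_minimal)
    with l have "d \<le> norm (\<eta> + l)" by auto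
    thus False using el d by simp
  qed
  show ?thesis
    using e0 C clos main unfolding Sm_def by (intro exI[of _ \<theta>0] exI[of _ \<epsilon>0] exI[of _ C]) auto
qed

end
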